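(* Let $G=(m,n,\boldsymbol{c},\boldsymbol{d},r_{\max},r_{\min})$ be an interbank lending game, let $\alpha\in(0,1]$, and let $\boldsymbol{s}^1\in\boldsymbol{S}$ be any initial strategy profile. Then the eager $\alpha$-uniform best-response dynamics $(\boldsymbol{s}^t)_{t\in\mathbb{N}}$ started at $\boldsymbol{s}^1$ converges to the unique pure Nash equilibrium $\boldsymbol{s}^*$ of $G$.
   Context: An interbank lending game $G=(m,n,\boldsymbol{c},\boldsymbol{d},r_{\max},r_{\min})$ consists of positive integers $m,n$, budgets $\boldsymbol{c}\in\mathbb{R}_{>0}^m$, demands $\boldsymbol{d}\in\mathbb{R}_{>0}^n$ and reals $0<r_{\min}<r_{\max}$. The players are the lenders $L=\{1,\dots,m\}$; $B=\{1,\dots,n\}$ is the set of borrowers. Lender $i$'s strategy set is $S_i=\{s_i\in\mathbb{R}_{\ge0}^n:\sum_{j\in B}s_{ij}\le c_i\}$, the strategy space is $\boldsymbol{S}=\prod_{i\in L}S_i$ with elements $\boldsymbol{s}=(s_{ij})$. The interest rate of borrower $j$ is $r_j(\boldsymbol{s})=(r_{\min}-r_{\max})\frac{\sum_{i\in L}s_{ij}}{d_j}+r_{\max}$ and lender $i$'s utility is $u_i(\boldsymbol{s})=\sum_{j\in B}(r_j(\boldsymbol{s})-r_{\min})s_{ij}$. A pure Nash equilibrium is $\boldsymbol{s}^*\in\boldsymbol{S}$ with $u_i(\boldsymbol{s}^* )\ge u_i(s_i,\boldsymbol{s}^*_{-i})$ for all $i\in L$, $s_i\in S_i$; $G$ has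 exactly one. For $\boldsymbol{s}\in\boldsymbol{S}$, lender $i$'s best-response set is $\mathrm{BR}_i(\boldsymbol{s})=\arg\max\{u_i(z_i,\boldsymbol{s}_{-i}):z_i\in S_i\}$. The eager $\alpha$-uniform best-response dynamics is a sequence $(\boldsymbol{s}^t)_{t\in\mathbb{N}}$ in $\boldsymbol{S}$ such that for every $t$ there is an updating lender $i^t\in L$ chosen (with ties broken in an arbitrary deterministic way) as one whose best response yields the highest utility increase among all lenders, i.e. $i^t\in\arg\max_{i\in L}\max_{\hat s_i\in\mathrm{BR}_i(\boldsymbol{s}^t)}\bigl(u_i(\hat s_i,\boldsymbol{s}^t_{-i})-u_i(\boldsymbol{s}^t)\bigr)$, and $\boldsymbol{s}^{t+1}=(s^{t+1}_{i^t},\boldsymbol{s}^t_{-i^t})$ with $s^{t+1}_{i^t}=s^t_{i^t}+\alpha(\hat s^t_{i^t}-s^t_{i^t})$ for some $\hat s^t_{i^t}\in\mathrm{BR}_{i^t}(\boldsymbol{s}^t)$. Convergence means $\boldsymbol{s}^t\to\boldsymbol{s}^*$ as $t\to\infty$. *)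

theory Defs
  imports "HOL-Analysis.Analysis"
begin

text \<open>Lenders are indexed by 0..<m, borrowers by 0..<n. A strategy profile is a
function s :: nat => nat => real, s i j = amount lender i lends to borrower j;
entries outside the index ranges are required to be 0 (canonical representation).\<close>

type_synonym profile = "nat \<Rightarrow> nat \<Rightarrow> real"
type_synonym strategy = "nat \<Rightarrow> real"

definition valid_game :: "nat \<Rightarrow> nat \<Rightarrow> (nat \<Rightarrow> real) \<Rightarrow> (nat \<Rightarrow> real) \<Rightarrow> real \<Rightarrow> real \<Rightarrow> bool" where
  "valid_game m n c d rmax rmin \<longleftrightarrow>
     m > 0 \<and> n > 0 \<and> (\<forall>i<m. c i > 0) \<and> (\<forall>j<n. d j > 0) \<and> 0 < rmin \<and> rmin < rmax"

definition strat_set :: "nat \<Rightarrow> (nat \<Rightarrow> real) \<Rightarrow> nat \<Rightarrow> strategy set" where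
  "strat_set n c i = {x. (\<forall>j<n. x j \<ge> 0) \<and> (\<forall>j\<ge>n. x j = 0) \<and> (\<Sum>j<n. x j) \<le> c i}"

definition profiles :: "nat \<Rightarrow> nat \<Rightarrow> (nat \<Rightarrow> real) \<Rightarrow> profile set" where
  "profiles m n c = {s. (\<forall>i<m. s i \<in> strat_set n c i) \<and> (\<forall>i\<ge>m. s i = (\<lambda>_. 0))}"

definition rate :: "nat \<Rightarrow> (nat \<Rightarrow> real) \<Rightarrow> real \<Rightarrow> real \<Rightarrow> profile \<Rightarrow> nat \<Rightarrow> real" where
  "rate m d rmax rmin s j = (rmin - rmax) * (\<Sum>i<m. s i j) / d j + rmax"

definition utility :: "nat \<Rightarrow> nat \<Rightarrow> (nat \<Rightarrow> real) \<Rightarrow> real \<Rightarrow> real \<Rightarrow> profile \<Rightarrow> nat \<Rightarrow> real" where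
  "utility m n d rmax rmin s i = (\<Sum>j<n. (rate m d rmax rmin s j - rmin) * s i j)"

definition is_pure_NE :: "nat \<Rightarrow> nat \<Rightarrow> (nat \<Rightarrow> real) \<Rightarrow> (nat \<Rightarrow> real) \<Rightarrow> real \<Rightarrow> real \<Rightarrow> profile \<Rightarrow> bool" where
  "is_pure_NE m n c d rmax rmin s \<longleftrightarrow> s \<in> profiles m n c \<and>
     (\<forall>i<m. \<forall>x\<in>strat_set n c i. utility m n d rmax rmin s i \<ge> utility m n d rmax rmin (s(i := x)) i)"

definition best_responses :: "nat \<Rightarrow> nat \<Rightarrow> (nat \<Rightarrow> real) \<Rightarrow> (nat \<Rightarrow> real) \<Rightarrow> real \<Rightarrow> real \<Rightarrow> profile \<Rightarrow> nat \<Rightarrow> strategy set" where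
  "best_responses m n c d rmax rmin s i =
     {z \<in> strat_set n c i. \<forall>x\<in>strat_set n c i.
        utility m n d rmax rmin (s(i := x)) i \<le> utility m n d rmax rmin (s(i := z)) i}"

definition eager_rule :: "nat \<Rightarrow> nat \<Rightarrow> (nat \<Rightarrow> real) \<Rightarrow> (nat \<Rightarrow> real) \<Rightarrow> real \<Rightarrow> real
     \<Rightarrow> (profile \<Rightarrow> nat \<times> strategy) \<Rightarrow> bool" where
  "eager_rule m n c d rmax rmin sel \<longleftrightarrow>
     (\<forall>s\<in>profiles m n c.
        fst (sel s) < m \<and>
        snd (sel s) \<in> best_responses m n c d rmax rmin s (fst (sel s)) \<and>
        (\<forall>k<m. \<forall>z\<in>best_responses m n c d rmax rmin s k.
           utility m n d rmax rmin (s(k := z)) k - utility m n d rmax rmin s k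
           \<le> utility m n d rmax rmin (s(fst (sel s) := snd (sel s))) (fst (sel s))
              - utility m n d rmax rmin s (fst (sel s))))"

definition eager_uniform_BR_dynamics :: "nat \<Rightarrow> nat \<Rightarrow> (nat \<Rightarrow> real) \<Rightarrow> (nat \<Rightarrow> real) \<Rightarrow> real \<Rightarrow> real
     \<Rightarrow> real \<Rightarrow> (profile \<Rightarrow> nat \<times> strategy) \<Rightarrow> (nat \<Rightarrow> profile) \<Rightarrow> bool" where
  "eager_uniform_BR_dynamics m n c d rmax rmin \<alpha> sel seq \<longleftrightarrow>
     eager_rule m n c d rmax rmin sel \<and>
     (\<forall>t. seq (Suc t) = (let (i, z) = sel (seq t)
                          in (seq t)(i := (\<lambda>j. seq t i j + \<alpha> * (z j - seq t i j)))))"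

end

theory Submission
  imports Defs
begin

lemma compact_PiE_UNIV:
  fixes K :: "'a \<Rightarrow> 'b::topological_space set"
  assumes "\<And>i. compact (K i)"
  shows "compact (PiE UNIV K)"
proof -
  have "compactin (product_topology (\<lambda>i. euclidean) UNIV) (PiE UNIV K)"
    using assms by (simp add: compactin_PiE)
  then show ?thesis by (simp add: euclidean_product_topology)
qed

lemma cont_coord1 [continuous_intros]:
  "continuous_on S (\<lambda>x::nat\<Rightarrow>real. x i)"
  by (rule continuous_on_product_then_coordinatewise[OF continuous_on_id])

lemma cont_coord2 [continuous_intros]:
  "continuous_on S (\<lambda>x::nat\<Rightarrow>nat\<Rightarrow>real. x i j)"
  by (rule continuous_on_product_then_coordinatewise[OF continuous_on_product_then_coordinatewise[OF continuous_on_id]])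

lemma strat_set_eq:
  assumes "c i \<ge> 0"
  shows "strat_set n c i = PiE UNIV (\<lambda>j. if j < n then {0..c i} else {0}) \<inter> {x. (\<Sum>j<n. x j) \<le> c i}"
proof (intro equalityI subsetI)
  fix x assume x: "x \<in> strat_set n c i"
  have "x j \<le> c i" if "j < n" for j
  proof -
    have "x j \<le> (\<Sum>j<n. x j)" using x that by (intro member_le_sum) (auto simp: strat_set_def)
    then show ?thesis using x by (auto simp: strat_set_def)
  qed
  then show "x \<in> PiE UNIV (\<lambda>j. if j < n then {0..c i} else {0}) \<inter> {x. (\<Sum>j<n. x j) \<le> c i}"
    using x by (auto simp: strat_set_def PiE_iff)
next
  fix x assume "x \<in> PiE UNIV (\<lambda>j. if j < n then {0..c i} else {0}) \<inter> {x. (\<Sum>j<n. x j) \<le> c i}"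
  then show "x \<in> strat_set n c i" 
    by (auto simp: strat_set_def PiE_iff) (metis atLeastAtMost_iff not_le singletonD)+
qed

lemma compact_strat_set:
  assumes "c i \<ge> 0"
  shows "compact (strat_set n c i)"
proof -
  have "compact (PiE UNIV (\<lambda>j. if j < n then {0..c i} else {0::real}))"
    by (rule compact_PiE_UNIV) auto
  moreover have "closed {x::nat\<Rightarrow>real. (\<Sum>j<n. x j) \<le> c i}"
    by (intro closed_Collect_le continuous_intros)
  ultimately show ?thesis using strat_set_eq[of c i n, OF assms] by (metis compact_Int_closed)
qed

lemma profiles_eq:
  "profiles m n c = PiE UNIV (\<lambda>i. if i < m then strat_set n c i else {\<lambda>_. 0})"
  by (auto simp: profiles_def PiE_iff) (metis not_le singletonD)+

lemma compact_profiles: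
  assumes "\<forall>i<m. c i \<ge> 0"
  shows "compact (profiles m n c)"
  unfolding profiles_eq by (rule compact_PiE_UNIV) (use assms compact_strat_set in auto)

definition Sm :: "nat \<Rightarrow> profile \<Rightarrow> nat \<Rightarrow> real" where
  "Sm m s j = (\<Sum>k<m. s k j)"
definition Pot :: "nat \<Rightarrow> nat \<Rightarrow> (nat \<Rightarrow> real) \<Rightarrow> real \<Rightarrow> profile \<Rightarrow> real" where
  "Pot m n d a s = (\<Sum>j<n. a * (Sm m s j - ((Sm m s j)^2 + (\<Sum>k<m. (s k j)^2)) / (2 * d j)))"
definition Lin :: "nat \<Rightarrow> nat \<Rightarrow> (nat \<Rightarrow> real) \<Rightarrow> real \<Rightarrow> profile \<Rightarrow> profile \<Rightarrow> real" where
  "Lin m n d a s v = (\<Sum>j<n. \<Sum>k<m. a * (v k j - (Sm m s j + s k j) * v k j / d j))"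
definition Qd :: "nat \<Rightarrow> nat \<Rightarrow> (nat \<Rightarrow> real) \<Rightarrow> real \<Rightarrow> profile \<Rightarrow> real" where
  "Qd m n d a v = (\<Sum>j<n. a * ((Sm m v j)^2 + (\<Sum>k<m. (v k j)^2)) / (2 * d j))"
definition addp :: "profile \<Rightarrow> profile \<Rightarrow> profile" where
  "addp s v = (\<lambda>k j. s k j + v k j)"
definition scl :: "real \<Rightarrow> profile \<Rightarrow> profile" where
  "scl t v = (\<lambda>k j. t * v k j)"
definition rowv :: "profile \<Rightarrow> nat \<Rightarrow> strategy \<Rightarrow> profile" where
  "rowv s i x = (\<lambda>k j. if k = i then x j - s i j else 0)"

lemma Pot_addp: "Pot m n d a (addp s v) = Pot m n d a s + Lin m n d a s v - Qd m n d a v"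
proof -
  have "a * (Sm m (addp s v) j - ((Sm m (addp s v) j)^2 + (\<Sum>k<m. (addp s v k j)^2)) / (2 * d j))
      = a * (Sm m s j - ((Sm m s j)^2 + (\<Sum>k<m. (s k j)^2)) / (2 * d j))
        + (\<Sum>k<m. a * (v k j - (Sm m s j + s k j) * v k j / d j))
        - a * ((Sm m v j)^2 + (\<Sum>k<m. (v k j)^2)) / (2 * d j)" for j
  proof -
    have e1: "Sm m (addp s v) j = Sm m s j + Sm m v j"
      by (simp add: Sm_def addp_def sum.distrib)
    have e2: "(\<Sum>k<m. (addp s v k j)^2) = (\<Sum>k<m. (s k j)^2) + 2 * (\<Sum>k<m. s k j * v k j) + (\<Sum>k<m. (v k j)^2)"
      by (simp add: addp_def power2_sum sum.distrib sum_distrib_left mult.assoc)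
    have e3: "(\<Sum>k<m. a * (v k j - (Sm m s j + s k j) * v k j / d j))
       = a * (Sm m v j - (Sm m s j * Sm m v j + (\<Sum>k<m. s k j * v k j)) / d j)"
    proof -
      have "(\<Sum>k<m. a * (v k j - (Sm m s j + s k j) * v k j / d j))
         = (\<Sum>k<m. a * v k j - (a * Sm m s j / d j) * v k j - (a / d j) * (s k j * v k j))"
        by (intro sum.cong) (auto simp: algebra_simps add_divide_distrib)
      also have "\<dots> = a * Sm m v j - (a * Sm m s j / d j) * Sm m v j - (a / d j) * (\<Sum>k<m. s k j * v k j)"
        by (simp add: sum_subtractf sum_distrib_left Sm_def)
      finally show ?thesis by (simp add: algebra_simps add_divide_distrib diff_divide_distrib)
    qed
    have alg: "a*((S+V) - ((S+V)^2 + (X + 2*Y + Z))*(inverse 2*D)) = a*(S - (S^2+X)*(inverse 2 * D)) + a*(V - (S*V + Y)*D) - a*(V^2+Z)*(inverse 2*D)" for S V X Y Z D :: real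
      by (simp add: algebra_simps power2_eq_square)
    show ?thesis unfolding e1 e2 e3
      using alg[of "Sm m s j" "Sm m v j" "\<Sum>k<m. (s k j)^2" "\<Sum>k<m. s k j * v k j" "\<Sum>k<m. (v k j)^2" "inverse (d j)"]
      by (simp only: divide_inverse inverse_mult_distrib mult.assoc)
  qed
  then show ?thesis unfolding Pot_def Lin_def Qd_def
    by (simp add: sum.distrib sum_subtractf)
qed

lemma Lin_scl: "Lin m n d a s (scl t v) = t * Lin m n d a s v"
  by (simp add: Lin_def scl_def sum_distrib_left algebra_simps)

lemma Qd_scl: "Qd m n d a (scl t v) = t^2 * Qd m n d a v"
proof -
  have "Sm m (scl t v) j = t * Sm m v j" for j by (simp add: Sm_def scl_def sum_distrib_left)
  then show ?thesis
    by (simp add: Qd_def scl_def sum_distrib_left algebra_simps power_mult_distrib)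
qed

lemma Qd_nonneg:
  assumes "a > 0" "\<forall>j<n. d j > 0"
  shows "Qd m n d a v \<ge> 0"
  unfolding Qd_def using assms by (intro sum_nonneg) (auto intro!: divide_nonneg_pos mult_nonneg_nonneg add_nonneg_nonneg sum_nonneg)

lemma Qd_ge:
  assumes "a > 0" "\<forall>j<n. d j > 0" "i < m" "j < n"
  shows "a * (v i j)^2 / (2 * d j) \<le> Qd m n d a v"
proof -
  have "a * (v i j)^2 / (2 * d j) \<le> a * ((Sm m v j)^2 + (\<Sum>k<m. (v k j)^2)) / (2 * d j)"
  proof -
    have "(v i j)^2 \<le> (\<Sum>k<m. (v k j)^2)" using assms by (intro member_le_sum) auto
    then have "(v i j)^2 \<le> (Sm m v j)^2 + (\<Sum>k<m. (v k j)^2)" by (smt (verit) zero_le_power2)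
    then show ?thesis using assms by (intro divide_right_mono mult_left_mono) auto
  qed
  also have "\<dots> \<le> Qd m n d a v" unfolding Qd_def using assms
    by (intro member_le_sum[where f = "\<lambda>j. a * ((Sm m v j)^2 + (\<Sum>k<m. (v k j)^2)) / (2 * d j)"])
      (auto intro!: divide_nonneg_pos mult_nonneg_nonneg add_nonneg_nonneg sum_nonneg)
  finally show ?thesis .
qed

lemma sum_if_upd:
  fixes g :: "nat \<Rightarrow> real"
  assumes "i < m"
  shows "(\<Sum>k<m. if k = i then y else g k) = (\<Sum>k<m. g k) - g i + y"
proof -
  have "(\<Sum>k<m. if k = i then y else g k) = (\<Sum>k<m. g k + (if k = i then y - g i else 0))"
    by (intro sum.cong) auto
  also have "\<dots> = (\<Sum>k<m. g k) - g i + y" using assms by (simp add: sum.distrib)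
  finally show ?thesis .
qed

lemma utility_pot:
  assumes "i < m"
  shows "utility m n d rmax rmin (s(i := x)) i - utility m n d rmax rmin s i
       = Pot m n d (rmax - rmin) (s(i := x)) - Pot m n d (rmax - rmin) s"
proof -
  have S: "Sm m (s(i := x)) j = Sm m s j - s i j + x j" for j
  proof -
    have "Sm m (s(i := x)) j = (\<Sum>k<m. if k = i then x j else s k j)"
      unfolding Sm_def by (intro sum.cong) auto
    then show ?thesis using sum_if_upd[OF assms, of "x j" "\<lambda>k. s k j"] by (simp add: Sm_def)
  qed
  have X: "(\<Sum>k<m. ((s(i := x)) k j)^2) = (\<Sum>k<m. (s k j)^2) - (s i j)^2 + (x j)^2" for j
  proof -
    have "(\<Sum>k<m. ((s(i := x)) k j)^2) = (\<Sum>k<m. if k = i then (x j)^2 else (s k j)^2)"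
      by (intro sum.cong) auto
    then show ?thesis using sum_if_upd[OF assms, of "(x j)^2" "\<lambda>k. (s k j)^2"] by simp
  qed
  define a where "a = rmax - rmin"
  have alg: "((rmin - rmax) * (S - y + z) * D + rmax - rmin) * z - ((rmin - rmax) * S * D + rmax - rmin) * y
      = (rmax - rmin) * ((S - y + z) - ((S - y + z)^2 + (X - y^2 + z^2)) * (inverse 2 * D))
        - (rmax - rmin) * (S - (S^2 + X) * (inverse 2 * D))" for S y z X D :: real
    by (simp add: field_simps power2_eq_square)
  have pj: "(rate m d rmax rmin (s(i := x)) j - rmin) * x j - (rate m d rmax rmin s j - rmin) * s i j
      = a * (Sm m (s(i := x)) j - ((Sm m (s(i := x)) j)^2 + (\<Sum>k<m. ((s(i := x)) k j)^2)) / (2 * d j))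
       - a * (Sm m s j - ((Sm m s j)^2 + (\<Sum>k<m. (s k j)^2)) / (2 * d j))" for j
  proof -
    have r1: "rate m d rmax rmin (s(i := x)) j - rmin = (rmin - rmax) * (Sm m s j - s i j + x j) * inverse (d j) + rmax - rmin"
      using S[of j] by (simp add: rate_def Sm_def divide_inverse)
    have r2: "rate m d rmax rmin s j - rmin = (rmin - rmax) * Sm m s j * inverse (d j) + rmax - rmin"
      by (simp add: rate_def Sm_def divide_inverse)
    have r3: "\<And>u. u / (2 * d j) = u * (inverse 2 * inverse (d j))"
      by (simp only: divide_inverse inverse_mult_distrib)
    show ?thesis unfolding r1 r2 S X r3 a_def
      by (rule alg)
  qed
  have "utility m n d rmax rmin (s(i := x)) i - utility m n d rmax rmin s i
     = (\<Sum>j<n. (rate m d rmax rmin (s(i := x)) j - rmin) * x j - (rate m d rmax rmin s j - rmin) * s i j)"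
    by (simp add: utility_def sum_subtractf)
  also have "\<dots> = Pot m n d a (s(i := x)) - Pot m n d a s"
    unfolding pj Pot_def by (simp add: sum_subtractf)
  finally show ?thesis by (simp add: a_def)
qed

lemma upd_eq: "s(i := x) = addp s (rowv s i x)"
  by (auto simp: addp_def rowv_def fun_eq_iff)

lemma upd_step: "s(i := (\<lambda>j. s i j + t * (x j - s i j))) = addp s (scl t (rowv s i x))"
  by (auto simp: addp_def rowv_def scl_def fun_eq_iff)

lemma addp_diff: "addp s (\<lambda>k j. s' k j - s k j) = s'"
  by (auto simp: addp_def fun_eq_iff)

lemma Lin_rows: "Lin m n d a s v = (\<Sum>i<m. Lin m n d a s (\<lambda>k j. if k = i then v k j else 0))"
proof -
  have "(\<Sum>i<m. Lin m n d a s (\<lambda>k j. if k = i then v k j else 0))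
      = (\<Sum>i<m. \<Sum>j<n. \<Sum>k<m. (if k = i then a * (v k j - (Sm m s j + s k j) * v k j / d j) else 0))"
    unfolding Lin_def by (intro sum.cong refl) auto
  also have "\<dots> = (\<Sum>i<m. \<Sum>j<n. a * (v i j - (Sm m s j + s i j) * v i j / d j))"
    by (simp add: sum.delta')
  also have "\<dots> = Lin m n d a s v"
    unfolding Lin_def by (rule sum.swap)
  finally show ?thesis by simp
qed

lemma row_eq: "(\<lambda>k j. if k = i then s' k j - s k j else 0) = rowv s i (s' i)"
  by (auto simp: rowv_def fun_eq_iff)

lemma strat_bounds:
  assumes "x \<in> strat_set n c i" "j < n"
  shows "0 \<le> x j" "x j \<le> c i"
proof -
  show "0 \<le> x j" using assms by (auto simp: strat_set_def)
  have "x j \<le> (\<Sum>j<n. x j)" using assms by (intro member_le_sum) (auto simp: strat_set_def)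
  then show "x j \<le> c i" using assms by (auto simp: strat_set_def)
qed

lemma strat_convex:
  assumes "x \<in> strat_set n c i" "y \<in> strat_set n c i" "0 \<le> t" "t \<le> 1"
  shows "(\<lambda>j. y j + t * (x j - y j)) \<in> strat_set n c i"
proof -
  have "(\<Sum>j<n. y j + t * (x j - y j)) = (1 - t) * (\<Sum>j<n. y j) + t * (\<Sum>j<n. x j)"
    by (simp add: sum.distrib sum_distrib_left sum_subtractf algebra_simps)
  also have "\<dots> \<le> (1 - t) * c i + t * c i"
    using assms by (intro add_mono mult_left_mono) (auto simp: strat_set_def)
  finally have "(\<Sum>j<n. y j + t * (x j - y j)) \<le> c i" by (simp add: algebra_simps)
  moreover have "0 \<le> y j + t * (x j - y j)" if "j < n" for j
  proof -
    have "0 \<le> x j" "0 \<le> y j" using assms that by (auto simp: strat_set_def)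
    then have "0 \<le> (1 - t) * y j + t * x j" using assms by (intro add_nonneg_nonneg mult_nonneg_nonneg) auto
    then show ?thesis by (simp add: algebra_simps)
  qed
  ultimately show ?thesis using assms by (auto simp: strat_set_def)
qed

lemma profiles_upd:
  assumes "s \<in> profiles m n c" "i < m" "x \<in> strat_set n c i"
  shows "s(i := x) \<in> profiles m n c"
  using assms by (auto simp: profiles_def)

lemma profiles_row: "s \<in> profiles m n c \<Longrightarrow> i < m \<Longrightarrow> s i \<in> strat_set n c i"
  by (auto simp: profiles_def)

lemma profiles_out: "s \<in> profiles m n c \<Longrightarrow> \<not> (i < m \<and> j < n) \<Longrightarrow> s i j = 0"
  by (cases "i < m") (auto simp: profiles_def strat_set_def)

lemma zero_profile: "\<forall>i<m. c i \<ge> 0 \<Longrightarrow> (\<lambda>_ _. 0) \<in> profiles m n c"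
  by (auto simp: profiles_def strat_set_def)

lemma Qd_row:
  assumes "a > 0" "\<forall>j<n. d j > 0" "s \<in> profiles m n c" "i < m" "x \<in> strat_set n c i"
  shows "Qd m n d a (rowv s i x) \<le> (\<Sum>j<n. a * (c i)^2 / d j)"
proof -
  have S: "Sm m (rowv s i x) j = x j - s i j" for j
    unfolding Sm_def rowv_def using assms by (simp add: sum.delta')
  have X: "(\<Sum>k<m. (rowv s i x k j)^2) = (x j - s i j)^2" for j
  proof -
    have "(\<Sum>k<m. (rowv s i x k j)^2) = (\<Sum>k<m. if k = i then (x j - s i j)^2 else 0)"
      by (intro sum.cong) (auto simp: rowv_def)
    then show ?thesis using assms by (simp add: sum.delta')
  qed
  have "Qd m n d a (rowv s i x) = (\<Sum>j<n. a * (x j - s i j)^2 / d j)"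
    unfolding Qd_def S X by (intro sum.cong) (auto simp: field_simps)
  also have "\<dots> \<le> (\<Sum>j<n. a * (c i)^2 / d j)"
  proof (intro sum_mono)
    fix j assume j: "j \<in> {..<n}"
    have si: "s i \<in> strat_set n c i" using assms profiles_row by blast
    from j have jn: "j < n" by simp
    have "\<bar>x j - s i j\<bar> \<le> c i" using strat_bounds[OF assms(5) jn] strat_bounds[OF si jn] by (auto simp: abs_le_iff)
    moreover have "0 \<le> c i" using calculation abs_ge_zero order_trans by blast
    ultimately have "\<bar>x j - s i j\<bar> \<le> \<bar>c i\<bar>" by simp
    then have "(x j - s i j)^2 \<le> (c i)^2"
      by (simp only: abs_le_square_iff)
    then show "a * (x j - s i j)^2 / d j \<le> a * (c i)^2 / d j"
      using assms j by (intro divide_right_mono mult_left_mono) auto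
  qed
  finally show ?thesis .
qed

lemma cont_Pot: "continuous_on UNIV (Pot m n d a)"
  unfolding Pot_def Sm_def divide_inverse by (intro continuous_intros)

lemma cont_upd: "continuous_on UNIV (\<lambda>x::strategy. s(i := x))"
proof (rule continuous_on_coordinatewise_then_product)
  fix k show "continuous_on UNIV (\<lambda>x::strategy. (s(i := x)) k)"
    by (cases "k = i") (auto intro: continuous_on_id continuous_on_const)
qed

definition bopt :: "nat \<Rightarrow> nat \<Rightarrow> (nat \<Rightarrow> real) \<Rightarrow> (nat \<Rightarrow> real) \<Rightarrow> real \<Rightarrow> profile \<Rightarrow> bool" where
  "bopt m n c d a s \<longleftrightarrow> (\<forall>i<m. \<forall>y\<in>strat_set n c i. Pot m n d a (s(i := y)) \<le> Pot m n d a s)"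

lemma step_pot:
  "Pot m n d a (s(i := (\<lambda>j. s i j + t * (x j - s i j))))
     = Pot m n d a s + t * Lin m n d a s (rowv s i x) - t^2 * Qd m n d a (rowv s i x)"
  unfolding upd_step Pot_addp Lin_scl Qd_scl ..

lemma FO:
  assumes a: "a > 0" and d: "\<forall>j<n. d j > 0" and s: "s \<in> profiles m n c" and i: "i < m"
    and x: "x \<in> strat_set n c i"
    and opt: "\<forall>y\<in>strat_set n c i. Pot m n d a (s(i := y)) \<le> Pot m n d a s"
  shows "Lin m n d a s (rowv s i x) \<le> 0"
proof (rule ccontr)
  define L where "L = Lin m n d a s (rowv s i x)"
  define Q where "Q = Qd m n d a (rowv s i x)"
  assume "\<not> Lin m n d a s (rowv s i x) \<le> 0"
  then have L: "L > 0" by (simp add: L_def)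
  have Q: "Q \<ge> 0" unfolding Q_def using Qd_nonneg a d by blast
  define t where "t = min 1 (L / (2 * Q + 1))"
  have t0: "t > 0" using L Q by (simp add: t_def)
  have t1: "t \<le> 1" by (simp add: t_def)
  have tle: "t \<le> L / (2 * Q + 1)" by (simp add: t_def)
  have "(\<lambda>j. s i j + t * (x j - s i j)) \<in> strat_set n c i"
    using strat_convex[OF x profiles_row[OF s i]] t0 t1 by simp
  then have "Pot m n d a (s(i := (\<lambda>j. s i j + t * (x j - s i j)))) \<le> Pot m n d a s"
    using opt by blast
  then have "t * L - t^2 * Q \<le> 0" unfolding step_pot L_def Q_def by simp
  then have "t * L \<le> t * (t * Q)" by (simp add: power2_eq_square algebra_simps)
  then have "L \<le> t * Q" using t0 by simp
  also have "\<dots> \<le> L / (2 * Q + 1) * Q" using tle Q by (intro mult_right_mono) auto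
  also have "\<dots> < L"
  proof -
    have "L * Q < L * (2 * Q + 1)" using L Q by (intro mult_strict_left_mono) auto
    then show ?thesis using Q by (simp add: field_simps)
  qed
  finally show False by simp
qed

lemma FOall:
  assumes a: "a > 0" and d: "\<forall>j<n. d j > 0" and s: "s \<in> profiles m n c"
    and s': "s' \<in> profiles m n c" and b: "bopt m n c d a s"
  shows "Lin m n d a s (\<lambda>k j. s' k j - s k j) \<le> 0"
proof -
  have "Lin m n d a s (\<lambda>k j. s' k j - s k j) = (\<Sum>i<m. Lin m n d a s (rowv s i (s' i)))"
    by (subst Lin_rows) (simp add: row_eq)
  also have "\<dots> \<le> 0"
  proof (intro sum_nonpos)
    fix i assume "i \<in> {..<m}"
    then have i: "i < m" by simp
    show "Lin m n d a s (rowv s i (s' i)) \<le> 0"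
      using FO[OF a d s i profiles_row[OF s' i]] b i unfolding bopt_def by blast
  qed
  finally show ?thesis .
qed

lemma quad_growth:
  assumes a: "a > 0" and d: "\<forall>j<n. d j > 0" and s: "s \<in> profiles m n c"
    and ss: "ss \<in> profiles m n c" and b: "bopt m n c d a ss"
  shows "Qd m n d a (\<lambda>k j. s k j - ss k j) \<le> Pot m n d a ss - Pot m n d a s"
proof -
  have "Pot m n d a s = Pot m n d a ss + Lin m n d a ss (\<lambda>k j. s k j - ss k j) - Qd m n d a (\<lambda>k j. s k j - ss k j)"
    using Pot_addp[of m n d a ss "\<lambda>k j. s k j - ss k j"] by (simp add: addp_diff)
  moreover have "Lin m n d a ss (\<lambda>k j. s k j - ss k j) \<le> 0" by (rule FOall[OF a d ss s b])
  ultimately show ?thesis by simp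
qed

lemma bopt_unique:
  assumes a: "a > 0" and d: "\<forall>j<n. d j > 0" and s: "s \<in> profiles m n c"
    and ss: "ss \<in> profiles m n c" and b: "bopt m n c d a ss" and b': "bopt m n c d a s"
  shows "s = ss"
proof -
  have q1: "Qd m n d a (\<lambda>k j. s k j - ss k j) \<le> Pot m n d a ss - Pot m n d a s"
    by (rule quad_growth[OF a d s ss b])
  have q2: "Qd m n d a (\<lambda>k j. ss k j - s k j) \<le> Pot m n d a s - Pot m n d a ss"
    by (rule quad_growth[OF a d ss s b'])
  have "Qd m n d a (\<lambda>k j. ss k j - s k j) \<ge> 0" using Qd_nonneg a d by blast
  then have q: "Qd m n d a (\<lambda>k j. s k j - ss k j) \<le> 0" using q1 q2 by simp
  show ?thesis
  proof (intro ext)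
    fix i j
    show "s i j = ss i j"
    proof (cases "i < m \<and> j < n")
      case True
      have "a * (s i j - ss i j)^2 / (2 * d j) \<le> 0"
        using Qd_ge[OF a d, of i m j "\<lambda>k j. s k j - ss k j"] True q by simp
      moreover have "2 * d j > 0" using d True by simp
      ultimately have "a * (s i j - ss i j)^2 \<le> 0" by (simp add: divide_le_0_iff)
      then have "(s i j - ss i j)^2 \<le> 0" using a by (simp add: mult_le_0_iff)
      then show ?thesis by simp
    next
      case False
      then show ?thesis using profiles_out[OF s] profiles_out[OF ss] by simp
    qed
  qed
qed

lemma exists_max:
  assumes "\<forall>i<m. c i \<ge> 0"
  shows "\<exists>ss\<in>profiles m n c. \<forall>s\<in>profiles m n c. Pot m n d a s \<le> Pot m n d a ss"
proof -
  have "profiles m n c \<noteq> {}" using zero_profile[OF assms] by blast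
  moreover have "continuous_on (profiles m n c) (Pot m n d a)"
    using continuous_on_subset[OF cont_Pot] by blast
  ultimately show ?thesis using continuous_attains_sup[OF compact_profiles[OF assms]] by blast
qed

lemma BR_exists:
  assumes "c i \<ge> 0" "i < m"
  shows "\<exists>z. z \<in> best_responses m n c d rmax rmin s i"
proof -
  have ne: "strat_set n c i \<noteq> {}" using assms by (auto simp: strat_set_def intro!: exI[of _ "\<lambda>_. 0"])
  have "continuous_on UNIV (\<lambda>x. Pot m n d (rmax - rmin) (s(i := x)))"
    by (rule continuous_on_compose2[OF cont_Pot cont_upd]) auto
  then obtain z where z: "z \<in> strat_set n c i"
    and zmax: "\<forall>y\<in>strat_set n c i. Pot m n d (rmax - rmin) (s(i := y)) \<le> Pot m n d (rmax - rmin) (s(i := z))"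
    using continuous_attains_sup[OF compact_strat_set[of c i n, OF assms(1)] ne] continuous_on_subset by blast
  have "utility m n d rmax rmin (s(i := y)) i \<le> utility m n d rmax rmin (s(i := z)) i"
    if "y \<in> strat_set n c i" for y
    using utility_pot[OF assms(2), where s = s and x = y and n = n and d = d and rmax = rmax and rmin = rmin]
      utility_pot[OF assms(2), where s = s and x = z and n = n and d = d and rmax = rmax and rmin = rmin] zmax that by fastforce
  then show ?thesis using z unfolding best_responses_def by blast
qed

lemma gap:
  assumes a: "a > 0" and d: "\<forall>j<n. d j > 0" and s: "s \<in> profiles m n c"
    and ss: "ss \<in> profiles m n c"
    and g: "\<forall>k<m. \<forall>y\<in>strat_set n c k. Pot m n d a (s(k := y)) - Pot m n d a s \<le> g"
    and t0: "0 < \<tau>" and t1: "\<tau> \<le> 1"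
  shows "Pot m n d a ss - Pot m n d a s \<le> real m * g / \<tau> + \<tau> * (\<Sum>i<m. \<Sum>j<n. a * (c i)^2 / d j)"
proof -
  have "Pot m n d a ss = Pot m n d a s + Lin m n d a s (\<lambda>k j. ss k j - s k j) - Qd m n d a (\<lambda>k j. ss k j - s k j)"
    using Pot_addp[of m n d a s "\<lambda>k j. ss k j - s k j"] by (simp add: addp_diff)
  moreover have "Qd m n d a (\<lambda>k j. ss k j - s k j) \<ge> 0" using Qd_nonneg a d by blast
  ultimately have "Pot m n d a ss - Pot m n d a s \<le> Lin m n d a s (\<lambda>k j. ss k j - s k j)" by simp
  also have "\<dots> = (\<Sum>i<m. Lin m n d a s (rowv s i (ss i)))"
    by (subst Lin_rows) (simp add: row_eq)
  also have "\<dots> \<le> (\<Sum>i<m. g / \<tau> + \<tau> * (\<Sum>j<n. a * (c i)^2 / d j))"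
  proof (intro sum_mono)
    fix i assume "i \<in> {..<m}"
    then have i: "i < m" by simp
    define L where "L = Lin m n d a s (rowv s i (ss i))"
    define Q where "Q = Qd m n d a (rowv s i (ss i))"
    have QB: "Q \<le> (\<Sum>j<n. a * (c i)^2 / d j)"
      unfolding Q_def by (rule Qd_row[OF a d s i profiles_row[OF ss i]])
    have "(\<lambda>j. s i j + \<tau> * (ss i j - s i j)) \<in> strat_set n c i"
      using strat_convex[OF profiles_row[OF ss i] profiles_row[OF s i]] t0 t1 by simp
    then have "Pot m n d a (s(i := (\<lambda>j. s i j + \<tau> * (ss i j - s i j)))) - Pot m n d a s \<le> g"
      using g i by blast
    then have "\<tau> * L - \<tau>^2 * Q \<le> g" unfolding step_pot L_def Q_def by simp
    then have "\<tau> * L \<le> g + \<tau>^2 * (\<Sum>j<n. a * (c i)^2 / d j)"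
      using QB t0 by (smt (verit) mult_left_mono zero_le_power2)
    then have "L \<le> (g + \<tau>^2 * (\<Sum>j<n. a * (c i)^2 / d j)) / \<tau>"
      using t0 by (simp add: pos_le_divide_eq mult.commute)
    also have "\<dots> = g / \<tau> + \<tau> * (\<Sum>j<n. a * (c i)^2 / d j)"
      using t0 by (simp add: field_simps power2_eq_square)
    finally show "Lin m n d a s (rowv s i (ss i)) \<le> g / \<tau> + \<tau> * (\<Sum>j<n. a * (c i)^2 / d j)"
      by (simp add: L_def)
  qed
  also have "\<dots> = real m * g / \<tau> + \<tau> * (\<Sum>i<m. \<Sum>j<n. a * (c i)^2 / d j)"
    by (simp add: sum.distrib sum_distrib_left)
  finally show ?thesis .
qed

theorem theorem4p1:
  fixes m n :: nat and c d :: "nat \<Rightarrow> real" and rmax rmin \<alpha> :: real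
    and sel :: "profile \<Rightarrow> nat \<times> strategy" and seq :: "nat \<Rightarrow> profile"
  assumes "valid_game m n c d rmax rmin"
    and "0 < \<alpha>" and "\<alpha> \<le> 1"
    and "seq 0 \<in> profiles m n c"
    and "eager_uniform_BR_dynamics m n c d rmax rmin \<alpha> sel seq"
  shows "\<exists>sstar. is_pure_NE m n c d rmax rmin sstar \<and>
           (\<forall>s'. is_pure_NE m n c d rmax rmin s' \<longrightarrow> s' = sstar) \<and>
           (\<forall>i j. (\<lambda>t. seq t i j) \<longlonglongrightarrow> sstar i j)"
proof -
  define a where "a = rmax - rmin"
  have m0: "m > 0" and cpos: "\<forall>i<m. c i > 0" and d: "\<forall>j<n. d j > 0" and a: "a > 0"
    using assms(1) by (auto simp: valid_game_def a_def)
  have c0: "\<forall>i<m. c i \<ge> 0" using cpos by auto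
  define PP where "PP = Pot m n d a"
  obtain ss where ss: "ss \<in> profiles m n c" and smax: "\<forall>s\<in>profiles m n c. PP s \<le> PP ss"
    using exists_max[OF c0] unfolding PP_def by blast
  have NE_bopt: "is_pure_NE m n c d rmax rmin s \<longleftrightarrow> bopt m n c d a s" if s: "s \<in> profiles m n c" for s
  proof -
    have "utility m n d rmax rmin (s(i := x)) i \<le> utility m n d rmax rmin s i
          \<longleftrightarrow> Pot m n d a (s(i := x)) \<le> Pot m n d a s" if "i < m" for i x
      using utility_pot[OF that, where s = s and x = x and n = n and d = d and rmax = rmax and rmin = rmin]
      unfolding a_def by linarith
    then show ?thesis using s unfolding is_pure_NE_def bopt_def by auto
  qed
  have bss: "bopt m n c d a ss"
    unfolding bopt_def using smax profiles_upd[OF ss] unfolding PP_def by blast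
  have NEss: "is_pure_NE m n c d rmax rmin ss" using NE_bopt[OF ss] bss by simp
  have uniq: "\<forall>s'. is_pure_NE m n c d rmax rmin s' \<longrightarrow> s' = ss"
  proof (intro allI impI)
    fix s' assume ne: "is_pure_NE m n c d rmax rmin s'"
    then have s': "s' \<in> profiles m n c" by (simp add: is_pure_NE_def)
    then have "bopt m n c d a s'" using NE_bopt ne by blast
    then show "s' = ss" using bopt_unique[OF a d s' ss bss] by blast
  qed
  have er: "eager_rule m n c d rmax rmin sel"
    and rec: "\<And>t. seq (Suc t) = (let (i, z) = sel (seq t)
                          in (seq t)(i := (\<lambda>j. seq t i j + \<alpha> * (z j - seq t i j))))"
    using assms(5) unfolding eager_uniform_BR_dynamics_def by auto
  define I where "I t = fst (sel (seq t))" for t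
  define Z where "Z t = snd (sel (seq t))" for t
  have seqSuc: "seq (Suc t) = (seq t)(I t := (\<lambda>j. seq t (I t) j + \<alpha> * (Z t j - seq t (I t) j)))" for t
    using rec[of t] unfolding I_def Z_def by (simp add: case_prod_unfold Let_def)
  have prof_step: "I t < m \<and> Z t \<in> best_responses m n c d rmax rmin (seq t) (I t)
     \<and> (\<forall>k<m. \<forall>z\<in>best_responses m n c d rmax rmin (seq t) k.
           utility m n d rmax rmin ((seq t)(k := z)) k - utility m n d rmax rmin (seq t) k
           \<le> utility m n d rmax rmin ((seq t)(I t := Z t)) (I t) - utility m n d rmax rmin (seq t) (I t))"
    if "seq t \<in> profiles m n c" for t
    using er that unfolding eager_rule_def I_def Z_def by blast
  have prof: "seq t \<in> profiles m n c" for t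
  proof (induction t)
    case 0 then show ?case using assms(4) by simp
  next
    case (Suc t)
    have It: "I t < m" and Zt: "Z t \<in> strat_set n c (I t)"
      using prof_step[OF Suc] unfolding best_responses_def by auto
    have "(\<lambda>j. seq t (I t) j + \<alpha> * (Z t j - seq t (I t) j)) \<in> strat_set n c (I t)"
      using strat_convex[OF Zt profiles_row[OF Suc It]] assms(2,3) by simp
    then show ?case unfolding seqSuc using profiles_upd[OF Suc It] by blast
  qed
  define G where "G t = PP ((seq t)(I t := Z t)) - PP (seq t)" for t
  have Gbound: "PP ((seq t)(k := y)) - PP (seq t) \<le> G t" if k: "k < m" and y: "y \<in> strat_set n c k" for t k y
  proof -
    obtain zk where zk: "zk \<in> best_responses m n c d rmax rmin (seq t) k"
      using BR_exists[of c k m n d rmax rmin "seq t"] c0 k by blast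
    have ps: "I t < m"
      and e: "utility m n d rmax rmin ((seq t)(k := zk)) k - utility m n d rmax rmin (seq t) k
           \<le> utility m n d rmax rmin ((seq t)(I t := Z t)) (I t) - utility m n d rmax rmin (seq t) (I t)"
      using prof_step[OF prof[of t]] k zk by auto
    have br: "utility m n d rmax rmin ((seq t)(k := y)) k \<le> utility m n d rmax rmin ((seq t)(k := zk)) k"
      using zk y unfolding best_responses_def by auto
    show ?thesis
      using e br utility_pot[OF k, where s = "seq t" and x = y and n = n and d = d and rmax = rmax and rmin = rmin]
        utility_pot[OF k, where s = "seq t" and x = zk and n = n and d = d and rmax = rmax and rmin = rmin]
        utility_pot[OF ps, where s = "seq t" and x = "Z t" and n = n and d = d and rmax = rmax and rmin = rmin]
      unfolding G_def PP_def a_def by linarith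
  qed
  have G0: "G t \<ge> 0" for t
    using Gbound[where t = t and k = 0 and y = "seq t 0"] m0 profiles_row[OF prof[of t] m0] by simp
  have inc: "PP (seq (Suc t)) - PP (seq t) \<ge> \<alpha> * G t" for t
  proof -
    define L where "L = Lin m n d a (seq t) (rowv (seq t) (I t) (Z t))"
    define Q where "Q = Qd m n d a (rowv (seq t) (I t) (Z t))"
    have Q0: "Q \<ge> 0" unfolding Q_def using Qd_nonneg a d by blast
    have h1: "PP (seq (Suc t)) = PP (seq t) + \<alpha> * L - \<alpha>^2 * Q"
      unfolding seqSuc PP_def step_pot L_def Q_def ..
    have h2: "G t = L - Q"
      unfolding G_def PP_def upd_eq Pot_addp L_def Q_def by simp
    have h3: "\<alpha>^2 * Q \<le> \<alpha> * Q"
      using assms(2,3) Q0 by (simp add: power2_eq_square mult_right_mono)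
    have h4: "\<alpha> * G t = \<alpha> * L - \<alpha> * Q" using h2 by (simp add: right_diff_distrib)
    show ?thesis using h1 h3 h4 by linarith
  qed
  have bnd: "PP (seq t) \<le> PP ss" for t using smax prof by blast
  have sumG: "(\<Sum>t<T. \<alpha> * G t) \<le> PP (seq T) - PP (seq 0)" for T
  proof (induction T)
    case 0 then show ?case by simp
  next
    case (Suc T) then show ?case using inc[of T] by simp
  qed
  have "(\<Sum>t<T. G t) \<le> (PP ss - PP (seq 0)) / \<alpha>" for T
  proof -
    have "\<alpha> * (\<Sum>t<T. G t) \<le> PP ss - PP (seq 0)"
      using sumG[of T] bnd[of T] by (simp add: sum_distrib_left)
    then show ?thesis using assms(2) by (simp add: pos_le_divide_eq mult.commute)
  qed
  then have "summable G" using G0 by (intro summableI_nonneg_bounded) auto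
  then have G_lim: "G \<longlonglongrightarrow> 0" by (rule summable_LIMSEQ_zero)
  define B where "B = (\<Sum>i<m. \<Sum>j<n. a * (c i)^2 / d j)"
  have B0: "B \<ge> 0" unfolding B_def using a d by (auto intro!: sum_nonneg divide_nonneg_pos)
  define e where "e t = PP ss - PP (seq t)" for t
  have e0: "e t \<ge> 0" for t using bnd[of t] by (simp add: e_def)
  have e_lim: "e \<longlonglongrightarrow> 0"
  proof (rule LIMSEQ_I)
    fix r :: real assume r: "0 < r"
    define \<tau> where "\<tau> = min 1 (r / (2 * (B + 1)))"
    have t0: "\<tau> > 0" using r B0 by (simp add: \<tau>_def)
    have t1: "\<tau> \<le> 1" by (simp add: \<tau>_def)
    have tB: "\<tau> * B < r / 2"
    proof -
      have "\<tau> * B \<le> r / (2 * (B + 1)) * B" using B0 by (intro mult_right_mono) (auto simp: \<tau>_def)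
      also have "\<dots> < r / 2"
      proof -
        have "r * B < r * (B + 1)" using r by simp
        then show ?thesis using B0 r by (simp add: field_simps)
      qed
      finally show ?thesis .
    qed
    have "0 < \<tau> * r / (2 * real m)" using t0 r m0 by simp
    from LIMSEQ_D[OF G_lim this] obtain N where N: "\<forall>t\<ge>N. norm (G t - 0) < \<tau> * r / (2 * real m)" by blast
    have "norm (e t - 0) < r" if "t \<ge> N" for t
    proof -
      have Gt: "G t < \<tau> * r / (2 * real m)" using N that by auto
      have ee: "e t \<le> real m * G t / \<tau> + \<tau> * B"
        unfolding e_def PP_def B_def
        using gap[OF a d prof[of t] ss _ t0 t1, of "G t"] Gbound unfolding PP_def by blast
      have "real m * G t / \<tau> < r / 2"
      proof -
        have "real m * G t < real m * (\<tau> * r / (2 * real m))" using Gt m0 by (intro mult_strict_left_mono) auto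
        also have "\<dots> = \<tau> * (r / 2)" using m0 by (simp add: field_simps)
        finally show ?thesis using t0 by (simp add: pos_divide_less_eq mult.commute)
      qed
      then have "real m * G t / \<tau> + \<tau> * B < r" using tB by linarith
      then show ?thesis using ee e0[of t] by simp
    qed
    then show "\<exists>N. \<forall>t\<ge>N. norm (e t - 0) < r" by blast
  qed
  have conv: "(\<lambda>t. seq t i j) \<longlonglongrightarrow> ss i j" for i j
  proof (cases "i < m \<and> j < n")
    case True
    have dj: "d j > 0" using d True by simp
    have sq: "(seq t i j - ss i j)^2 \<le> 2 * d j / a * e t" for t
    proof -
      have "a * (seq t i j - ss i j)^2 / (2 * d j) \<le> Qd m n d a (\<lambda>k j. seq t k j - ss k j)"
        using Qd_ge[OF a d, of i m j "\<lambda>k j. seq t k j - ss k j"] True by simp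
      also have "\<dots> \<le> e t" unfolding e_def PP_def by (rule quad_growth[OF a d prof ss bss])
      finally have "a * (seq t i j - ss i j)^2 \<le> e t * (2 * d j)" using dj by (simp add: pos_divide_le_eq)
      then show ?thesis using a dj by (simp add: field_simps)
    qed
    have h: "(\<lambda>t. sqrt (2 * d j / a * e t)) \<longlonglongrightarrow> 0"
      using tendsto_real_sqrt[OF tendsto_mult[OF tendsto_const e_lim, of "2 * d j / a"]] by simp
    have "(\<lambda>t. seq t i j - ss i j) \<longlonglongrightarrow> 0"
    proof (rule Lim_null_comparison[OF _ h])
      show "\<forall>\<^sub>F t in sequentially. norm (seq t i j - ss i j) \<le> sqrt (2 * d j / a * e t)"
        using real_sqrt_le_mono[OF sq] by (simp add: real_sqrt_abs)
    qed
    then show ?thesis by (rule LIM_zero_cancel)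
  next
    case False
    have "seq t i j = 0" for t using profiles_out[OF prof False] .
    then show ?thesis using profiles_out[OF ss False] by simp
  qed
  show ?thesis using NEss uniq conv by blast
qed

end
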